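(* For all $k,l\ge1$, $X\in\mathfrak{W}'_k$ and $Y\in\mathfrak{W}'_l$, there exists $V\in\mathfrak{W}'_{k+l}$ with $(\lambda(X)-X)(\lambda(Y)-Y)=\lambda(V)-V$ as operators on $\mathfrak{H}^1$.
   Context: Let $\mathfrak{H}=\mathbb{Q}\langle x,y\rangle$, $\mathfrak{H}^1=\mathbb{Q}+\mathfrak{H}y$, $\mathfrak{H}^1_n$ its homogeneous part of degree $n$; $L_w(w')=ww'$; products of operators denote composition. Let $z_k=x^{k-1}y$. The harmonic product $\ast$ on $\mathfrak{H}^1$ is the $\mathbb{Q}$-bilinear map with $1\ast w=w\ast1=w$ and $z_kw\ast z_lw'=z_k(w\ast z_lw')+z_l(z_kw\ast w')+z_{k+l}(w\ast w')$; $\mathcal{H}_w(v)=w\ast v$. $\mathfrak{W}$ is the $\mathbb{Q}$-span of the operators $\mathcal{H}_w$ ($w\in\mathfrak{H}^1$) on $\mathfrak{H}^1$; $\mathfrak{W}'$ (resp. $\mathfrak{W}'_n$) the $\mathbb{Q}$-span of the operators $L_{z_k}\mathcal{H}_w$ on $\mathfrak{H}^1$ with $k\ge1$, $w\in\mathfrak{H}^1$ (resp. $1\le k\le n$, $w\in\mathfrak{H}^1_{n-k}$). The $L_{z_k}\mathcal{H}_w$ over distinct pairs $(k,w)$, $w$ a word, are linearly independent, and $\lambda:\mathfrak{W}'\to\mathfrak{W}$ is the $\mathbb{Q}$-linear map with $\lambda(L_{z_k}\mathcal{H}_w)=\mathcal{H}_{z_kw}$. *)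

theory Defs
  imports Complex_Main
begin

datatype letter = x | y

type_synonym word = "letter list"

text \<open>Elements of H: finitely supported functions word => rat (coefficients).\<close>
type_synonym poly = "word \<Rightarrow> rat"

definition supp :: "('a \<Rightarrow> rat) \<Rightarrow> 'a set" where
  "supp p = {u. p u \<noteq> 0}"

definition mon :: "word \<Rightarrow> poly" where
  "mon w = (\<lambda>u. if u = w then 1 else 0)"

text \<open>Words spanning H^1 = Q + H y: the empty word or words ending in y.\<close>
definition h1word :: "word \<Rightarrow> bool" where
  "h1word w \<longleftrightarrow> w = [] \<or> last w = y"

definition inH1 :: "poly \<Rightarrow> bool" where
  "inH1 p \<longleftrightarrow> finite (supp p) \<and> (\<forall>w \<in> supp p. h1word w)"

definition z :: "nat \<Rightarrow> word" where
  "z k = replicate (k - 1) x @ [y]"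

definition zword :: "nat list \<Rightarrow> word" where
  "zword ks = concat (map z ks)"

definition zdec :: "word \<Rightarrow> nat list" where
  "zdec w = (THE ks. (\<forall>k \<in> set ks. 0 < k) \<and> zword ks = w)"

text \<open>Harmonic product on sequences of z-indices, with values in
  coefficient functions on such sequences.\<close>
definition cons_ind :: "nat \<Rightarrow> (nat list \<Rightarrow> rat) \<Rightarrow> (nat list \<Rightarrow> rat)" where
  "cons_ind k f = (\<lambda>u. case u of [] \<Rightarrow> 0 | j # u' \<Rightarrow> if j = k then f u' else 0)"

fun qsh :: "nat list \<Rightarrow> nat list \<Rightarrow> (nat list \<Rightarrow> rat)" where
  "qsh [] b = (\<lambda>u. if u = b then 1 else 0)"
| "qsh (k # a) [] = (\<lambda>u. if u = k # a then 1 else 0)"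
| "qsh (k # a) (l # b) = (\<lambda>u. cons_ind k (qsh a (l # b)) u
                              + cons_ind l (qsh (k # a) b) u
                              + cons_ind (k + l) (qsh a b) u)"

definition hw :: "word \<Rightarrow> word \<Rightarrow> poly" where
  "hw u v = (\<lambda>w. if h1word w then qsh (zdec u) (zdec v) (zdec w) else 0)"

definition harm :: "poly \<Rightarrow> poly \<Rightarrow> poly" where
  "harm p q = (\<lambda>w. \<Sum>u \<in> supp p. \<Sum>v \<in> supp q. p u * q v * hw u v w)"

definition Hop :: "poly \<Rightarrow> poly \<Rightarrow> poly" where
  "Hop p = (\<lambda>v. harm p v)"

definition Lw :: "word \<Rightarrow> poly \<Rightarrow> poly" where
  "Lw u p = (\<lambda>w. if take (length u) w = u then p (drop (length u) w) else 0)"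

text \<open>An element of W' is given as a finite formal combination
  c = sum c(j,w) [L_{z_j} H_w] over pairs (j,w), w a word.  Since these operators
  are linearly independent (standing fact of the paper), this is the same as an
  element of W', and lambda is well defined on it.\<close>
type_synonym comb = "(nat \<times> word) \<Rightarrow> rat"

definition inWp :: "nat \<Rightarrow> comb \<Rightarrow> bool" where
  "inWp n c \<longleftrightarrow> finite (supp c) \<and>
     (\<forall>(j, w) \<in> supp c. 1 \<le> j \<and> j \<le> n \<and> h1word w \<and> length w = n - j)"

definition Op :: "comb \<Rightarrow> poly \<Rightarrow> poly" where
  "Op c = (\<lambda>v w. \<Sum>(j, u) \<in> supp c. c (j, u) * Lw (z j) (Hop (mon u) v) w)"

text \<open>lambda applied to it: L_{z_j} H_u |-> H_{z_j u}.\<close>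
definition Lam :: "comb \<Rightarrow> poly \<Rightarrow> poly" where
  "Lam c = (\<lambda>v w. \<Sum>(j, u) \<in> supp c. c (j, u) * Hop (mon (z j @ u)) v w)"

definition Dop :: "comb \<Rightarrow> poly \<Rightarrow> poly" where
  "Dop c = (\<lambda>v w. Lam c v w - Op c v w)"

end

theory Submission
  imports Defs "HOL-Library.Function_Algebras"
begin

definition pos :: "nat list \<Rightarrow> bool" where "pos ks \<longleftrightarrow> (\<forall>k\<in>set ks. 0 < k)"

lemma length_z[simp]: "1 \<le> k \<Longrightarrow> length (z k) = k"
  by (simp add: z_def)

lemma z_ne[simp]: "z k \<noteq> []" by (simp add: z_def)
lemma z_ne2[simp]: "[] \<noteq> z k" by (simp add: z_def)
lemma last_z[simp]: "last (z k) = y" by (simp add: z_def)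

lemma zword_Nil[simp]: "zword [] = []" by (simp add: zword_def)
lemma zword_Cons[simp]: "zword (k#ks) = z k @ zword ks" by (simp add: zword_def)

lemma h1word_Nil[simp]: "h1word []" by (simp add: h1word_def)

lemma h1word_zapp_iff: "h1word (z k @ a) \<longleftrightarrow> h1word a"
  by (cases "a = []") (auto simp: h1word_def)

lemma h1word_zapp: "h1word a \<Longrightarrow> h1word (z k @ a)"
  by (simp add: h1word_zapp_iff)

lemma h1word_zword: "h1word (zword ks)"
  by (induction ks) (auto simp: h1word_zapp)

lemma takeWhile_rep: "takeWhile (\<lambda>c. c = x) (replicate n x @ y # r) = replicate n x"
  by (induction n) auto

lemma takeWhile_z: "takeWhile (\<lambda>c. c = x) (z k @ r) = replicate (k - 1) x"
  using takeWhile_rep by (simp add: z_def)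

lemma z_app_inj:
  assumes "z k @ r = z k' @ r'" "1 \<le> k" "1 \<le> k'"
  shows "k = k' \<and> r = r'"
proof -
  have "replicate (k - 1) x = replicate (k' - 1) (x::letter)"
    using arg_cong[OF assms(1), of "takeWhile (\<lambda>c. c = x)"] by (simp add: takeWhile_z)
  then have "k - 1 = k' - 1" by (metis length_replicate)
  then have "k = k'" using assms by arith
  then show ?thesis using assms by simp
qed

lemma zword_inj: "pos ks \<Longrightarrow> pos ks' \<Longrightarrow> zword ks = zword ks' \<Longrightarrow> ks = ks'"
proof (induction ks arbitrary: ks')
  case Nil then show ?case by (cases ks') (auto)
next
  case (Cons k ks)
  then show ?case
  proof (cases ks')
    case Nil then show ?thesis using Cons by simp
  next
    case (Cons k' ks'')
    with Cons.prems have "k = k' \<and> zword ks = zword ks''"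
      by (intro z_app_inj) (auto simp: pos_def)
    then show ?thesis using Cons.IH Cons.prems Cons by (auto simp: pos_def)
  qed
qed

lemma y_in_split: "y \<in> set w \<Longrightarrow> \<exists>n r. w = replicate n x @ y # r"
proof (induction w)
  case Nil then show ?case by simp
next
  case (Cons c w)
  show ?case
  proof (cases c)
    case x
    then have "y \<in> set w" using Cons.prems by auto
    then obtain n r where "w = replicate n x @ y # r" using Cons.IH by blast
    then have "c # w = replicate (Suc n) x @ y # r" using x by simp
    then show ?thesis by blast
  next
    case y
    then have "c # w = replicate 0 x @ y # w" by simp
    then show ?thesis by blast
  qed
qed

lemma h1word_split:
  assumes "h1word w" "w \<noteq> []"
  shows "\<exists>k r. 1 \<le> k \<and> h1word r \<and> w = z k @ r \<and> length r < length w"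
proof -
  have "last w = y" using assms by (simp add: h1word_def)
  then have "y \<in> set w" using assms(2) by (metis last_in_set)
  then obtain n r where w: "w = replicate n x @ y # r" using y_in_split by blast
  have "h1word r"
  proof (cases "r = []")
    case False
    then have "last r = last w" using w by simp
    then show ?thesis using \<open>last w = y\<close> by (simp add: h1word_def)
  qed (simp)
  moreover have "w = z (Suc n) @ r" using w by (simp add: z_def)
  ultimately show ?thesis using w by (intro exI[of _ "Suc n"] exI[of _ r]) auto
qed

lemma h1word_zword_ex: "h1word w \<Longrightarrow> \<exists>ks. pos ks \<and> zword ks = w"
proof (induction "length w" arbitrary: w rule: less_induct)
  case less
  show ?case
  proof (cases "w = []")
    case True
    then have "pos [] \<and> zword [] = w" by (simp add: pos_def)
    then show ?thesis by blast
  next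
    case False
    then obtain k r where kr: "1 \<le> k" "h1word r" "w = z k @ r" "length r < length w"
      using h1word_split less.prems by blast
    then obtain ks where ks: "pos ks" "zword ks = r" using less.hyps by blast
    then have "pos (k#ks) \<and> zword (k#ks) = w" using kr by (simp add: pos_def)
    then show ?thesis by blast
  qed
qed

lemma zdec_zword: "pos ks \<Longrightarrow> zdec (zword ks) = ks"
  unfolding zdec_def
proof (rule the_equality)
  assume "pos ks"
  then show "(\<forall>k\<in>set ks. 0 < k) \<and> zword ks = zword ks" by (simp add: pos_def)
next
  fix ks' assume "pos ks" "(\<forall>k\<in>set ks'. 0 < k) \<and> zword ks' = zword ks"
  then show "ks' = ks" using zword_inj[of ks' ks] by (simp add: pos_def)
qed

lemma zdec_h1: "h1word w \<Longrightarrow> pos (zdec w) \<and> zword (zdec w) = w"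
proof -
  assume "h1word w"
  then obtain ks where "pos ks" "zword ks = w" using h1word_zword_ex by blast
  then show ?thesis using zdec_zword[of ks] by simp
qed

lemma zdec_zapp: "h1word a \<Longrightarrow> 1 \<le> k \<Longrightarrow> zdec (z k @ a) = k # zdec a"
proof -
  assume "h1word a" "1 \<le> k"
  then have "z k @ a = zword (k # zdec a)" "pos (k # zdec a)" using zdec_h1[of a] by (auto simp: pos_def)
  then show ?thesis using zdec_zword[of "k # zdec a"] by simp
qed

lemma zdec_Nil[simp]: "zdec [] = []"
  using zdec_zword[of "[]"] by (simp add: pos_def)

lemma zdec_eq_Nil: "h1word w \<Longrightarrow> zdec w = [] \<longleftrightarrow> w = []"
  using zdec_h1[of w] by auto

lemma zdec_inj: "h1word w \<Longrightarrow> h1word w' \<Longrightarrow> zdec w = zdec w' \<longleftrightarrow> w = w'"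
  using zdec_h1[of w] zdec_h1[of w'] by metis

lemma cons_ind_zdec:
  assumes "h1word w" "1 \<le> k"
  shows "cons_ind k f (zdec w) = (if take (length (z k)) w = z k then f (zdec (drop (length (z k)) w)) else 0)"
proof (cases "zdec w")
  case Nil
  then have "w = []" using zdec_eq_Nil assms by auto
  then show ?thesis using Nil by (simp add: cons_ind_def)
next
  case (Cons j ks)
  then have w: "w = z j @ zword ks" "pos (j#ks)" using zdec_h1[OF assms(1)] by auto
  have j: "1 \<le> j" using w by (auto simp: pos_def)
  show ?thesis
  proof (cases "j = k")
    case True
    then show ?thesis using Cons w assms zdec_zword[of ks] by (simp add: cons_ind_def pos_def)
  next
    case False
    have "take (length (z k)) w \<noteq> z k"
    proof
      assume "take (length (z k)) w = z k"
      then have "w = z k @ drop (length (z k)) w" by (metis append_take_drop_id)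
      then have "j = k" using w j assms z_app_inj by metis
      then show False using False by simp
    qed
    then show ?thesis using Cons False by (simp add: cons_ind_def)
  qed
qed

lemma cons_ind_nz: "cons_ind k f s \<noteq> 0 \<Longrightarrow> \<exists>s'. s = k # s' \<and> f s' \<noteq> 0"
  by (cases s) (auto simp: cons_ind_def split: if_splits)

lemma supp_cons_ind: "supp (cons_ind k f) \<subseteq> (\<lambda>u. k # u) ` supp f"
  unfolding supp_def using cons_ind_nz by blast

lemma finite_supp_qsh: "finite (supp (qsh a b))"
proof (induction a b rule: qsh.induct)
  case (1 b)
  have "supp (qsh [] b) \<subseteq> {b}" by (auto simp: supp_def)
  then show ?case using finite_subset by blast
next
  case (2 k a)
  have "supp (qsh (k#a) []) \<subseteq> {k#a}" by (auto simp: supp_def)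
  then show ?case using finite_subset by blast
next
  case (3 k a l b)
  have "supp (qsh (k # a) (l # b)) \<subseteq> supp (cons_ind k (qsh a (l # b))) \<union> supp (cons_ind l (qsh (k # a) b))
     \<union> supp (cons_ind (k + l) (qsh a b))" by (auto simp: supp_def)
  also have "\<dots> \<subseteq> (\<lambda>u. k # u) ` supp (qsh a (l # b)) \<union> (\<lambda>u. l # u) ` supp (qsh (k # a) b)
     \<union> (\<lambda>u. (k+l) # u) ` supp (qsh a b)" using supp_cons_ind by blast
  finally show ?case using 3 finite_subset by blast
qed

lemma qsh_sum: "qsh a b s \<noteq> 0 \<Longrightarrow> sum_list s = sum_list a + sum_list b"
proof (induction a b arbitrary: s rule: qsh.induct)
  case (1 b) then show ?case by (auto split: if_splits)
next
  case (2 k a) then show ?case by (auto split: if_splits)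
next
  case (3 k a l b)
  have "cons_ind k (qsh a (l # b)) s \<noteq> 0 \<or> cons_ind l (qsh (k # a) b) s \<noteq> 0 \<or> cons_ind (k + l) (qsh a b) s \<noteq> 0"
    using "3.prems" by auto
  then show ?case
  proof (elim disjE)
    assume "cons_ind k (qsh a (l # b)) s \<noteq> 0"
    then obtain s' where "s = k # s'" "qsh a (l # b) s' \<noteq> 0" using cons_ind_nz by blast
    then show ?thesis using "3.IH"(1)[of s'] by simp
  next
    assume "cons_ind l (qsh (k # a) b) s \<noteq> 0"
    then obtain s' where "s = l # s'" "qsh (k # a) b s' \<noteq> 0" using cons_ind_nz by blast
    then show ?thesis using "3.IH"(2)[of s'] by simp
  next
    assume "cons_ind (k + l) (qsh a b) s \<noteq> 0"
    then obtain s' where "s = (k + l) # s'" "qsh a b s' \<noteq> 0" using cons_ind_nz by blast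
    then show ?thesis using "3.IH"(3)[of s'] by simp
  qed
qed

lemma length_zword: "pos ks \<Longrightarrow> length (zword ks) = sum_list ks"
  by (induction ks) (auto simp: pos_def)

lemma supp_hw_sub: "supp (hw u v) \<subseteq> zword ` supp (qsh (zdec u) (zdec v))"
proof
  fix w assume "w \<in> supp (hw u v)"
  then have "h1word w" "zdec w \<in> supp (qsh (zdec u) (zdec v))"
    by (auto simp: supp_def hw_def split: if_splits)
  then show "w \<in> zword ` supp (qsh (zdec u) (zdec v))" using zdec_h1[of w] by force
qed

lemma finite_supp_hw: "finite (supp (hw u v))"
  using supp_hw_sub finite_supp_qsh finite_subset by blast

lemma h1_supp_hw: "w \<in> supp (hw u v) \<Longrightarrow> h1word w"
  by (auto simp: supp_def hw_def split: if_splits)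

lemma length_supp_hw:
  assumes "h1word u" "h1word v" "w \<in> supp (hw u v)"
  shows "length w = length u + length v"
proof -
  have "h1word w" "qsh (zdec u) (zdec v) (zdec w) \<noteq> 0"
    using assms by (auto simp: supp_def hw_def split: if_splits)
  then have "sum_list (zdec w) = sum_list (zdec u) + sum_list (zdec v)" using qsh_sum by blast
  then show ?thesis using length_zword zdec_h1 assms \<open>h1word w\<close> by metis
qed

lemma hw_Nil_left: "h1word v \<Longrightarrow> hw [] v = mon v"
  by (auto simp: fun_eq_iff hw_def mon_def zdec_inj)

lemma qsh_Nil_right: "qsh a [] = (\<lambda>u. if u = a then 1 else 0)"
  by (cases a) auto

lemma hw_Nil_right: "h1word u \<Longrightarrow> hw u [] = mon u"
  by (auto simp: fun_eq_iff hw_def mon_def zdec_inj qsh_Nil_right)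

lemma h1word_drop:
  assumes "take (length (z k)) w = z k"
  shows "h1word w \<longleftrightarrow> h1word (drop (length (z k)) w)"
proof -
  have "w = z k @ drop (length (z k)) w" using assms by (metis append_take_drop_id)
  then show ?thesis using h1word_zapp_iff by metis
qed

lemma Lw_hw: "Lw (z k) (hw a b) w = (if take (length (z k)) w = z k \<and> h1word w then qsh (zdec a) (zdec b) (zdec (drop (length (z k)) w)) else 0)"
  using h1word_drop[of k w] by (auto simp: Lw_def hw_def simp del: length_z)

lemma hw_rec:
  assumes "1 \<le> k" "1 \<le> l" "h1word a" "h1word b"
  shows "hw (z k @ a) (z l @ b) = Lw (z k) (hw a (z l @ b)) + Lw (z l) (hw (z k @ a) b) + Lw (z (k + l)) (hw a b)"
proof
  fix w
  show "hw (z k @ a) (z l @ b) w = (Lw (z k) (hw a (z l @ b)) + Lw (z l) (hw (z k @ a) b) + Lw (z (k + l)) (hw a b)) w"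
  proof (cases "h1word w")
    case True
    have kl: "1 \<le> k + l" using assms by simp
    have e: "hw (z k @ a) (z l @ b) w = qsh (k # zdec a) (l # zdec b) (zdec w)"
      using True assms by (simp add: hw_def zdec_zapp)
    show ?thesis unfolding e plus_fun_apply Lw_hw
      using True assms by (simp add: zdec_zapp cons_ind_zdec[OF True] kl del: length_z)
  next
    case False
    then show ?thesis unfolding plus_fun_apply Lw_hw by (simp add: hw_def)
  qed
qed

definition lin :: "('a \<Rightarrow> 'b \<Rightarrow> rat) \<Rightarrow> ('a \<Rightarrow> rat) \<Rightarrow> 'b \<Rightarrow> rat" where
  "lin K p = (\<lambda>w. \<Sum>u\<in>supp p. p u * K u w)"

abbreviation fs :: "('a \<Rightarrow> rat) \<Rightarrow> bool" where "fs p \<equiv> finite (supp p)"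

lemma lin_superset:
  assumes "finite A" "supp p \<subseteq> A"
  shows "lin K p w = (\<Sum>u\<in>A. p u * K u w)"
  unfolding lin_def using assms by (intro sum.mono_neutral_left) (auto simp: supp_def)

lemma supp_lin: "supp (lin K p) \<subseteq> (\<Union>u\<in>supp p. supp (K u))"
proof
  fix w assume "w \<in> supp (lin K p)"
  then have "(\<Sum>u\<in>supp p. p u * K u w) \<noteq> 0" by (simp add: supp_def lin_def)
  then obtain u where "u \<in> supp p" "p u * K u w \<noteq> 0" by (meson sum.neutral)
  then show "w \<in> (\<Union>u\<in>supp p. supp (K u))" by (auto simp: supp_def)
qed

lemma fs_lin: "fs p \<Longrightarrow> (\<forall>u\<in>supp p. fs (K u)) \<Longrightarrow> fs (lin K p)"
  using supp_lin finite_subset by (metis finite_UN_I)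

lemma lin_cong: "(\<And>u. u \<in> supp p \<Longrightarrow> K u = K' u) \<Longrightarrow> lin K p = lin K' p"
  by (simp add: lin_def)

lemma lin_comp:
  assumes "fs p" "\<forall>u\<in>supp p. fs (G u)"
  shows "lin F (lin G p) = lin (\<lambda>u. lin F (G u)) p"
proof
  fix w
  define B where "B = (\<Union>u\<in>supp p. supp (G u))"
  have B: "finite B" using assms by (simp add: B_def)
  have "lin F (lin G p) w = (\<Sum>v\<in>B. lin G p v * F v w)"
    by (rule lin_superset[OF B]) (unfold B_def, rule supp_lin)
  also have "\<dots> = (\<Sum>v\<in>B. \<Sum>u\<in>supp p. p u * G u v * F v w)"
    by (simp add: lin_def sum_distrib_right)
  also have "\<dots> = (\<Sum>u\<in>supp p. \<Sum>v\<in>B. p u * G u v * F v w)"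
    by (rule sum.swap)
  also have "\<dots> = (\<Sum>u\<in>supp p. p u * lin F (G u) w)"
  proof (rule sum.cong)
    fix u assume u: "u \<in> supp p"
    have "lin F (G u) w = (\<Sum>v\<in>B. G u v * F v w)"
      by (rule lin_superset[OF B]) (unfold B_def, rule UN_upper, rule u)
    then show "(\<Sum>v\<in>B. p u * G u v * F v w) = p u * lin F (G u) w"
      by (simp add: sum_distrib_left mult.assoc)
  qed simp
  finally show "lin F (lin G p) w = lin (\<lambda>u. lin F (G u)) p w" by (simp add: lin_def)
qed

lemma lin_swap:
  assumes "fs p" "fs c"
  shows "lin (\<lambda>u. lin (\<lambda>v. A u v) c) p = lin (\<lambda>v. lin (\<lambda>u. A u v) p) c"
proof
  fix w
  have "lin (\<lambda>u. lin (\<lambda>v. A u v) c) p w = (\<Sum>u\<in>supp p. \<Sum>v\<in>supp c. p u * c v * A u v w)"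
    by (simp add: lin_def sum_distrib_left mult.assoc)
  also have "\<dots> = (\<Sum>v\<in>supp c. \<Sum>u\<in>supp p. p u * c v * A u v w)" by (rule sum.swap)
  also have "\<dots> = lin (\<lambda>v. lin (\<lambda>u. A u v) p) c w"
    by (simp add: lin_def sum_distrib_left mult.assoc mult.left_commute)
  finally show "lin (\<lambda>u. lin (\<lambda>v. A u v) c) p w = lin (\<lambda>v. lin (\<lambda>u. A u v) p) c w" .
qed

lemma lin_add_ker: "lin (\<lambda>u. K1 u + K2 u) p = lin K1 p + lin K2 p"
  by (simp add: lin_def fun_eq_iff sum.distrib distrib_left)

lemma lin_diff_ker: "lin (\<lambda>u. K1 u - K2 u) p = lin K1 p - lin K2 p"
  by (simp add: lin_def fun_eq_iff sum_subtractf right_diff_distrib)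

lemma lin_add:
  assumes "fs p" "fs q"
  shows "lin K (p + q) = lin K p + lin K q"
proof
  fix w
  define A where "A = supp p \<union> supp q"
  have A: "finite A" "supp p \<subseteq> A" "supp q \<subseteq> A" "supp (p + q) \<subseteq> A"
    using assms by (auto simp: A_def supp_def)
  show "lin K (p + q) w = (lin K p + lin K q) w"
    using A by (simp add: lin_superset[of A] sum.distrib distrib_right)
qed

lemma lin_diff:
  assumes "fs p" "fs q"
  shows "lin K (p - q) = lin K p - lin K q"
proof
  fix w
  define A where "A = supp p \<union> supp q"
  have A: "finite A" "supp p \<subseteq> A" "supp q \<subseteq> A" "supp (p - q) \<subseteq> A"
    using assms by (auto simp: A_def supp_def)
  show "lin K (p - q) w = (lin K p - lin K q) w"
    using A by (simp add: lin_superset[of A] sum_subtractf left_diff_distrib)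
qed

lemma supp_mon: "supp (mon u) = {u}" by (auto simp: supp_def mon_def)
lemma fs_mon: "fs (mon u)" by (simp add: supp_mon)

lemma lin_mon: "lin K (mon u) = K u"
  unfolding lin_def supp_mon by (simp add: mon_def)

lemma lin_mon_id: "fs p \<Longrightarrow> lin mon p = p"
proof
  fix w assume "fs p"
  show "lin mon p w = p w"
  proof (cases "w \<in> supp p")
    case True
    then have "lin mon p w = (\<Sum>u\<in>supp p. if u = w then p u else 0)"
      by (auto simp: lin_def mon_def intro!: sum.cong)
    also have "\<dots> = p w" using True \<open>fs p\<close> by (simp add: sum.delta')
    finally show ?thesis .
  next
    case False
    have "lin mon p w = (\<Sum>u\<in>supp p. p u * (if w = u then 1 else 0))"
      by (simp add: lin_def mon_def)
    also have "\<dots> = (\<Sum>u\<in>supp p. 0)"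
      by (rule sum.cong) (use False in auto)
    finally have "lin mon p w = (\<Sum>u\<in>supp p. 0)" .
    then show ?thesis using False by (simp add: supp_def)
  qed
qed

lemma fs_add: "fs p \<Longrightarrow> fs q \<Longrightarrow> fs (p + q)"
  by (rule finite_subset[of _ "supp p \<union> supp q"]) (auto simp: supp_def)
lemma fs_diff: "fs p \<Longrightarrow> fs q \<Longrightarrow> fs (p - q)"
  by (rule finite_subset[of _ "supp p \<union> supp q"]) (auto simp: supp_def)

lemma lin_tensor:
  assumes "fs c1" "fs c2"
  shows "lin (\<lambda>x. lin (\<lambda>y. K x y) c2) c1 = lin (\<lambda>xy. K (fst xy) (snd xy)) (\<lambda>xy. c1 (fst xy) * c2 (snd xy))"
proof
  fix w
  have s: "supp (\<lambda>xy. c1 (fst xy) * c2 (snd xy)) = supp c1 \<times> supp c2" by (auto simp: supp_def)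
  have "lin (\<lambda>x. lin (\<lambda>y. K x y) c2) c1 w = (\<Sum>x\<in>supp c1. \<Sum>y\<in>supp c2. c1 x * c2 y * K x y w)"
    by (simp add: lin_def sum_distrib_left mult.assoc)
  also have "\<dots> = (\<Sum>xy\<in>supp c1 \<times> supp c2. c1 (fst xy) * c2 (snd xy) * K (fst xy) (snd xy) w)"
    by (simp add: sum.cartesian_product case_prod_beta)
  finally show "lin (\<lambda>x. lin (\<lambda>y. K x y) c2) c1 w = lin (\<lambda>xy. K (fst xy) (snd xy)) (\<lambda>xy. c1 (fst xy) * c2 (snd xy)) w"
    by (simp add: lin_def s)
qed

lemma harm_lin: "harm p q = lin (\<lambda>u. lin (hw u) q) p"
  by (simp add: harm_def lin_def fun_eq_iff sum_distrib_left mult.assoc)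

lemma harm_mon_left: "harm (mon u) q = lin (hw u) q"
  by (simp add: harm_lin lin_mon)

lemma hw_harm: "hw u v = harm (mon u) (mon v)"
  by (simp add: harm_mon_left lin_mon)

lemma fs_harm: "fs p \<Longrightarrow> fs q \<Longrightarrow> fs (harm p q)"
  unfolding harm_lin by (intro fs_lin ballI) (auto intro: fs_lin finite_supp_hw)

lemma harm_first: "harm p q = lin (\<lambda>u. harm (mon u) q) p"
  unfolding harm_mon_left by (rule harm_lin)

lemma harm_second: "fs p \<Longrightarrow> fs q \<Longrightarrow> harm p q = lin (\<lambda>v. harm p (mon v)) q"
  unfolding harm_lin lin_mon by (rule lin_swap)

lemma harm_lin1:
  assumes "fs p" "\<forall>u\<in>supp p. fs (G u)"
  shows "harm (lin G p) q = lin (\<lambda>u. harm (G u) q) p"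
proof -
  have "harm (lin G p) q = lin (\<lambda>u. harm (mon u) q) (lin G p)" by (rule harm_first)
  also have "\<dots> = lin (\<lambda>u. lin (\<lambda>u. harm (mon u) q) (G u)) p" by (rule lin_comp[OF assms])
  also have "\<dots> = lin (\<lambda>u. harm (G u) q) p" by (simp add: harm_first[symmetric])
  finally show ?thesis .
qed

lemma harm_lin2:
  assumes "fs p" "fs c" "\<forall>y\<in>supp c. fs (G y)"
  shows "harm p (lin G c) = lin (\<lambda>y. harm p (G y)) c"
proof -
  have "harm p (lin G c) = lin (\<lambda>v. harm p (mon v)) (lin G c)"
    using harm_second assms fs_lin by blast
  also have "\<dots> = lin (\<lambda>y. lin (\<lambda>v. harm p (mon v)) (G y)) c" using lin_comp assms(2,3) by blast
  also have "\<dots> = lin (\<lambda>y. harm p (G y)) c"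
    by (rule lin_cong) (use harm_second assms in auto)
  finally show ?thesis .
qed

lemma harm_add1: "fs p1 \<Longrightarrow> fs p2 \<Longrightarrow> harm (p1 + p2) q = harm p1 q + harm p2 q"
  by (subst (1 2 3) harm_first) (rule lin_add)

lemma harm_add2: "fs p \<Longrightarrow> fs q1 \<Longrightarrow> fs q2 \<Longrightarrow> harm p (q1 + q2) = harm p q1 + harm p q2"
  by (simp add: harm_second fs_add lin_add)

lemma harm_diff2: "fs p \<Longrightarrow> fs q1 \<Longrightarrow> fs q2 \<Longrightarrow> harm p (q1 - q2) = harm p q1 - harm p q2"
  by (simp add: harm_second fs_diff lin_diff)

lemma Lw_lin_comm: "Lw v (lin K p) = lin (\<lambda>u. Lw v (K u)) p"
  by (simp add: Lw_def lin_def fun_eq_iff)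

lemma Lw_mon: "Lw v (mon u) = mon (v @ u)"
proof
  fix w
  have "w = v @ u \<longleftrightarrow> take (length v) w = v \<and> drop (length v) w = u"
    by (metis append_eq_conv_conj)
  then show "Lw v (mon u) w = mon (v @ u) w" by (auto simp: Lw_def mon_def)
qed

lemma Lw_add: "Lw v (p + q) = Lw v p + Lw v q"
  by (simp add: Lw_def fun_eq_iff)
lemma Lw_diff: "Lw v (p - q) = Lw v p - Lw v q"
  by (simp add: Lw_def fun_eq_iff)
lemma Lw_Nil: "Lw [] p = p"
  by (simp add: Lw_def fun_eq_iff)

lemma Lw_as_lin: "fs p \<Longrightarrow> Lw v p = lin (\<lambda>u. mon (v @ u)) p"
  using Lw_lin_comm[of v mon p] by (simp add: lin_mon_id Lw_mon)

lemma fs_Lw: "fs p \<Longrightarrow> fs (Lw v p)"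
  by (simp add: Lw_as_lin fs_lin fs_mon)

lemma harm_LL:
  assumes "fs P" "fs Q"
  shows "harm (Lw v P) (Lw v' Q) = lin (\<lambda>a. lin (\<lambda>b. hw (v @ a) (v' @ b)) Q) P"
proof -
  have "harm (Lw v P) (Lw v' Q) = lin (\<lambda>a. harm (mon (v @ a)) (Lw v' Q)) P"
    unfolding Lw_as_lin[OF assms(1)] by (rule harm_lin1) (use assms fs_mon in auto)
  also have "\<dots> = lin (\<lambda>a. lin (\<lambda>b. hw (v @ a) (v' @ b)) Q) P"
  proof (rule lin_cong)
    fix a
    show "harm (mon (v @ a)) (Lw v' Q) = lin (\<lambda>b. hw (v @ a) (v' @ b)) Q"
      unfolding Lw_as_lin[OF assms(2)]
      by (subst harm_lin2) (use assms fs_mon hw_harm in auto)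
  qed
  finally show ?thesis .
qed

lemma harm_L1: "fs P \<Longrightarrow> fs Q \<Longrightarrow> harm P (Lw v' Q) = lin (\<lambda>a. lin (\<lambda>b. hw a (v' @ b)) Q) P"
  using harm_LL[of P Q "[]" v'] by (simp add: Lw_Nil)
lemma harm_L2: "fs P \<Longrightarrow> fs Q \<Longrightarrow> harm (Lw v P) Q = lin (\<lambda>a. lin (\<lambda>b. hw (v @ a) b) Q) P"
  using harm_LL[of P Q v "[]"] by (simp add: Lw_Nil)
lemma harm_L0: "fs P \<Longrightarrow> fs Q \<Longrightarrow> harm P Q = lin (\<lambda>a. lin (\<lambda>b. hw a b) Q) P"
  using harm_LL[of P Q "[]" "[]"] by (simp add: Lw_Nil)

lemma harm_rec:
  assumes k: "1 \<le> k" "1 \<le> l" and P: "fs P" "\<forall>a\<in>supp P. h1word a" and Q: "fs Q" "\<forall>b\<in>supp Q. h1word b"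
  shows "harm (Lw (z k) P) (Lw (z l) Q) = Lw (z k) (harm P (Lw (z l) Q)) + Lw (z l) (harm (Lw (z k) P) Q) + Lw (z (k+l)) (harm P Q)"
proof -
  have "harm (Lw (z k) P) (Lw (z l) Q) = lin (\<lambda>a. lin (\<lambda>b. hw (z k @ a) (z l @ b)) Q) P"
    using harm_LL P Q by blast
  also have "\<dots> = lin (\<lambda>a. lin (\<lambda>b. Lw (z k) (hw a (z l @ b)) + Lw (z l) (hw (z k @ a) b) + Lw (z (k + l)) (hw a b)) Q) P"
    by (intro lin_cong) (use hw_rec k P Q in auto)
  also have "\<dots> = lin (\<lambda>a. lin (\<lambda>b. Lw (z k) (hw a (z l @ b))) Q) P + lin (\<lambda>a. lin (\<lambda>b. Lw (z l) (hw (z k @ a) b)) Q) P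
      + lin (\<lambda>a. lin (\<lambda>b. Lw (z (k + l)) (hw a b)) Q) P"
    by (simp add: lin_add_ker)
  also have "\<dots> = Lw (z k) (harm P (Lw (z l) Q)) + Lw (z l) (harm (Lw (z k) P) Q) + Lw (z (k+l)) (harm P Q)"
    by (simp add: harm_L1 harm_L2 harm_L0 P Q Lw_lin_comm)
  finally show ?thesis .
qed

abbreviation h1s :: "poly \<Rightarrow> bool" where "h1s p \<equiv> \<forall>w\<in>supp p. h1word w"

lemma h1s_hw: "h1s (hw u v)" using h1_supp_hw by blast
lemma h1s_mon: "h1word u \<Longrightarrow> h1s (mon u)" by (simp add: supp_mon)

lemma harm_mon_Nil_left: "fs q \<Longrightarrow> h1s q \<Longrightarrow> harm (mon []) q = q"
proof -
  assume q: "fs q" "h1s q"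
  have "harm (mon []) q = lin (hw []) q" by (rule harm_mon_left)
  also have "\<dots> = lin mon q" by (rule lin_cong) (use q hw_Nil_left in auto)
  finally show ?thesis using lin_mon_id q by simp
qed

lemma harm_mon_Nil_right: "fs p \<Longrightarrow> h1s p \<Longrightarrow> harm p (mon []) = p"
proof -
  assume q: "fs p" "h1s p"
  have "harm p (mon []) = lin (\<lambda>u. harm (mon u) (mon [])) p" by (rule harm_first)
  also have "\<dots> = lin mon p" by (rule lin_cong) (use q hw_Nil_right hw_harm in auto)
  finally show ?thesis using lin_mon_id q by simp
qed

lemma assoc_word:
  "h1word a \<Longrightarrow> h1word b \<Longrightarrow> h1word c \<Longrightarrow> harm (hw a b) (mon c) = harm (mon a) (hw b c)"
proof (induction "length a + length b + length c" arbitrary: a b c rule: less_induct)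
  case less
  note IH = less.hyps
  show ?case
  proof (cases "a = [] \<or> b = [] \<or> c = []")
    case True
    then show ?thesis
    proof (elim disjE)
      assume "a = []"
      then show ?thesis using less.prems
        by (simp add: hw_Nil_left harm_mon_Nil_left finite_supp_hw h1s_hw hw_harm[symmetric])
    next
      assume "b = []"
      then show ?thesis using less.prems
        by (simp add: hw_Nil_left hw_Nil_right)
    next
      assume "c = []"
      then show ?thesis using less.prems
        by (simp add: hw_Nil_right harm_mon_Nil_right finite_supp_hw h1s_hw hw_harm[symmetric])
    qed
  next
    case False
    then obtain i a' j b' k c' where
      A: "1 \<le> i" "h1word a'" "a = z i @ a'" "length a' < length a" and
      B: "1 \<le> j" "h1word b'" "b = z j @ b'" "length b' < length b" and
      C: "1 \<le> k" "h1word c'" "c = z k @ c'" "length c' < length c"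
      using h1word_split less.prems by meson
    define m :: "word \<Rightarrow> poly" where "m = mon"
    have fm: "\<And>u. fs (m u)" by (simp add: m_def fs_mon)
    have hm: "\<And>u. h1word u \<Longrightarrow> h1s (m u)" by (simp add: m_def supp_mon)
    have fh: "\<And>u v. fs (hw u v)" by (rule finite_supp_hw)
    have ma: "m a = Lw (z i) (m a')" and mb: "m b = Lw (z j) (m b')" and mc: "m c = Lw (z k) (m c')"
      using A B C by (simp_all add: m_def Lw_mon)
    have ih: "\<And>a1 b1 c1. length a1 + length b1 + length c1 < length a + length b + length c \<Longrightarrow>
        h1word a1 \<Longrightarrow> h1word b1 \<Longrightarrow> h1word c1 \<Longrightarrow> harm (hw a1 b1) (m c1) = harm (m a1) (hw b1 c1)"
      using IH unfolding m_def by blast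
    have hab: "hw a b = Lw (z i) (hw a' b) + Lw (z j) (hw a b') + Lw (z (i+j)) (hw a' b')"
      using hw_rec A B by simp
    have hbc: "hw b c = Lw (z j) (hw b' c) + Lw (z k) (hw b c') + Lw (z (j+k)) (hw b' c')"
      using hw_rec B C by simp
    have rec: "\<And>i k P Q. 1 \<le> i \<Longrightarrow> 1 \<le> k \<Longrightarrow> fs P \<Longrightarrow> h1s P \<Longrightarrow> fs Q \<Longrightarrow> h1s Q \<Longrightarrow>
      harm (Lw (z i) P) (Lw (z k) Q) = Lw (z i) (harm P (Lw (z k) Q)) + Lw (z k) (harm (Lw (z i) P) Q) + Lw (z (i+k)) (harm P Q)"
      by (rule harm_rec) auto
    have "harm (hw a b) (m c) = harm (Lw (z i) (hw a' b)) (Lw (z k) (m c')) + harm (Lw (z j) (hw a b')) (Lw (z k) (m c'))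
        + harm (Lw (z (i+j)) (hw a' b')) (Lw (z k) (m c'))"
      unfolding hab mc by (simp add: harm_add1 fs_add fs_Lw fh)
    also have "\<dots> = Lw (z i) (harm (hw a' b) (m c)) + Lw (z j) (harm (hw a b') (m c)) + Lw (z (i+j)) (harm (hw a' b') (m c))
        + Lw (z k) (harm (hw a b) (m c'))
        + Lw (z (i+k)) (harm (hw a' b) (m c')) + Lw (z (j+k)) (harm (hw a b') (m c')) + Lw (z (i+j+k)) (harm (hw a' b') (m c'))"
    proof -
      have e: "Lw (z k) (harm (hw a b) (m c')) = Lw (z k) (harm (Lw (z i) (hw a' b)) (m c')) + Lw (z k) (harm (Lw (z j) (hw a b')) (m c'))
          + Lw (z k) (harm (Lw (z (i+j)) (hw a' b')) (m c'))"
        unfolding hab by (simp add: harm_add1 fs_add fs_Lw fh Lw_add)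
      show ?thesis
        unfolding e mc
        using rec[of i k "hw a' b" "m c'"] rec[of j k "hw a b'" "m c'"] rec[of "i+j" k "hw a' b'" "m c'"]
          A B C fh fm hm h1s_hw
        by (simp add: add_ac)
    qed
    also have "\<dots> = Lw (z i) (harm (m a') (hw b c)) + Lw (z j) (harm (m a) (hw b' c)) + Lw (z (i+j)) (harm (m a') (hw b' c))
        + Lw (z k) (harm (m a) (hw b c'))
        + Lw (z (i+k)) (harm (m a') (hw b c')) + Lw (z (j+k)) (harm (m a) (hw b' c')) + Lw (z (i+j+k)) (harm (m a') (hw b' c'))"
    proof -
      have p: "h1word a" "h1word b" "h1word c" using less.prems by auto
      note lens = A(4) B(4) C(4)
      have "harm (hw a' b) (m c) = harm (m a') (hw b c)" by (rule ih) (use lens p A B C in auto)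
      moreover have "harm (hw a b') (m c) = harm (m a) (hw b' c)" by (rule ih) (use lens p A B C in auto)
      moreover have "harm (hw a' b') (m c) = harm (m a') (hw b' c)" by (rule ih) (use lens p A B C in auto)
      moreover have "harm (hw a b) (m c') = harm (m a) (hw b c')" by (rule ih) (use lens p A B C in auto)
      moreover have "harm (hw a' b) (m c') = harm (m a') (hw b c')" by (rule ih) (use lens p A B C in auto)
      moreover have "harm (hw a b') (m c') = harm (m a) (hw b' c')" by (rule ih) (use lens p A B C in auto)
      moreover have "harm (hw a' b') (m c') = harm (m a') (hw b' c')" by (rule ih) (use lens p A B C in auto)
      ultimately show ?thesis by simp
    qed
    also have "\<dots> = harm (m a) (hw b c)"
    proof -
      have e: "Lw (z i) (harm (m a') (hw b c)) = Lw (z i) (harm (m a') (Lw (z j) (hw b' c))) + Lw (z i) (harm (m a') (Lw (z k) (hw b c')))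
          + Lw (z i) (harm (m a') (Lw (z (j+k)) (hw b' c')))"
        unfolding hbc by (simp add: harm_add2 fs_add fs_Lw fh fm Lw_add)
      have e2: "harm (m a) (hw b c) = harm (Lw (z i) (m a')) (Lw (z j) (hw b' c)) + harm (Lw (z i) (m a')) (Lw (z k) (hw b c'))
          + harm (Lw (z i) (m a')) (Lw (z (j+k)) (hw b' c'))"
        unfolding hbc ma by (simp add: harm_add2 fs_add fs_Lw fh fm)
      show ?thesis
        unfolding e e2
        using rec[of i j "m a'" "hw b' c"] rec[of i k "m a'" "hw b c'"] rec[of i "j+k" "m a'" "hw b' c'"]
          A B C fh fm hm h1s_hw ma[symmetric]
        by (simp add: add_ac)
    qed
    finally show ?thesis by (simp add: m_def)
  qed
qed

lemma assoc_poly: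
  assumes "h1word a" "h1word b" "fs v" "h1s v"
  shows "harm (hw a b) v = harm (mon a) (harm (mon b) v)"
proof -
  have "harm (hw a b) v = lin (\<lambda>c. harm (hw a b) (mon c)) v"
    using harm_second finite_supp_hw assms by blast
  also have "\<dots> = lin (\<lambda>c. harm (mon a) (hw b c)) v"
    by (rule lin_cong) (use assoc_word assms in auto)
  also have "\<dots> = harm (mon a) (lin (hw b) v)"
    by (rule harm_lin2[symmetric]) (use assms fs_mon finite_supp_hw in auto)
  also have "\<dots> = harm (mon a) (harm (mon b) v)" by (simp add: harm_mon_left)
  finally show ?thesis .
qed

lemma h1s_harm: "h1s (harm p q)"
proof
  fix w assume "w \<in> supp (harm p q)"
  show "h1word w"
  proof (rule ccontr)
    assume "\<not> h1word w"
    then have "harm p q w = 0" by (simp add: harm_def hw_def)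
    then show False using \<open>w \<in> supp (harm p q)\<close> by (simp add: supp_def)
  qed
qed

definition Dk :: "nat \<times> word \<Rightarrow> poly \<Rightarrow> poly" where
  "Dk e v = harm (mon (z (fst e) @ snd e)) v - Lw (z (fst e)) (harm (mon (snd e)) v)"

lemma Dop_lin: "Dop c v = lin (\<lambda>e. Dk e v) c"
  by (simp add: Dop_def Lam_def Op_def Hop_def lin_def Dk_def fun_eq_iff case_prod_beta
      sum_subtractf right_diff_distrib)

lemma fs_Dk: "fs v \<Longrightarrow> fs (Dk e v)"
  by (simp add: Dk_def fs_diff fs_harm fs_mon fs_Lw)

lemma Dk_lin:
  assumes "fs c" "\<forall>t\<in>supp c. fs (G t)"
  shows "Dk e (lin G c) = lin (\<lambda>t. Dk e (G t)) c"
  unfolding Dk_def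
  by (simp add: harm_lin2[OF fs_mon assms] Lw_lin_comm lin_diff_ker)

definition emb :: "nat \<Rightarrow> poly \<Rightarrow> comb" where
  "emb j p = (\<lambda>(i, a). if i = j then p a else 0)"

lemma supp_emb: "supp (emb j p) = Pair j ` supp p"
  by (auto simp: supp_def emb_def split: if_splits)

lemma fs_emb: "fs p \<Longrightarrow> fs (emb j p)"
  by (simp add: supp_emb)

lemma lin_emb: "lin K (emb j p) = lin (\<lambda>a. K (j, a)) p"
proof
  fix w
  have "lin K (emb j p) w = (\<Sum>t\<in>Pair j ` supp p. emb j p t * K t w)"
    by (simp add: lin_def supp_emb)
  also have "\<dots> = (\<Sum>a\<in>supp p. emb j p (j, a) * K (j, a) w)"
    by (subst sum.reindex) (auto simp: inj_on_def)
  finally show "lin K (emb j p) w = lin (\<lambda>a. K (j, a)) p w" by (simp add: lin_def emb_def)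
qed

lemma Dk_sum:
  assumes "fs P" "fs v"
  shows "lin (\<lambda>a. Dk (j, a) v) P = harm (Lw (z j) P) v - Lw (z j) (harm P v)"
proof -
  have "lin (\<lambda>a. Dk (j, a) v) P = lin (\<lambda>a. harm (mon (z j @ a)) v) P - lin (\<lambda>a. Lw (z j) (harm (mon a) v)) P"
    by (simp add: Dk_def lin_diff_ker)
  also have "lin (\<lambda>a. harm (mon (z j @ a)) v) P = harm (Lw (z j) P) v"
    unfolding Lw_as_lin[OF assms(1)] by (rule harm_lin1[symmetric]) (use assms fs_mon in auto)
  also have "lin (\<lambda>a. Lw (z j) (harm (mon a) v)) P = Lw (z j) (harm P v)"
    by (simp add: Lw_lin_comm harm_first[of P v])
  finally show ?thesis .
qed

definition V0 :: "nat \<times> word \<Rightarrow> nat \<times> word \<Rightarrow> comb" where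
  "V0 e f = emb (fst e) (hw (snd e) (z (fst f) @ snd f)) + emb (fst f) (hw (z (fst e) @ snd e) (snd f))
     + emb (fst e + fst f) (hw (snd e) (snd f))"

lemma fs_V0: "fs (V0 e f)"
  by (simp add: V0_def fs_add fs_emb finite_supp_hw)

lemma pair_identity:
  assumes j: "1 \<le> j" "1 \<le> m" and u: "h1word u" "h1word w" and v: "fs v" "h1s v"
  shows "Dk (j, u) (Dk (m, w) v) = Dop (V0 (j, u) (m, w)) v"
proof -
  have fh: "\<And>a b. fs (hw a b)" by (rule finite_supp_hw)
  define P1 where "P1 = hw u (z m @ w)"
  define P2 where "P2 = hw (z j @ u) w"
  define P3 where "P3 = hw u w"
  define H1 where "H1 = harm (mon (z m @ w)) v"
  define Hw where "Hw = harm (mon w) v"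
  have fP: "fs P1" "fs P2" "fs P3" by (simp_all add: P1_def P2_def P3_def fh)
  have fH: "fs H1" "fs Hw" by (simp_all add: H1_def Hw_def fs_harm fs_mon v)
  have h1H: "h1s Hw" unfolding Hw_def by (rule h1s_harm)
  have "Dop (V0 (j, u) (m, w)) v = lin (\<lambda>e. Dk e v) (emb j P1) + lin (\<lambda>e. Dk e v) (emb m P2) + lin (\<lambda>e. Dk e v) (emb (j+m) P3)"
    unfolding Dop_lin V0_def P1_def P2_def P3_def by (simp add: lin_add fs_add fs_emb fh)
  also have "\<dots> = (harm (Lw (z j) P1) v + harm (Lw (z m) P2) v + harm (Lw (z (j+m)) P3) v)
      - (Lw (z j) (harm P1 v) + Lw (z m) (harm P2 v) + Lw (z (j+m)) (harm P3 v))"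
    by (simp add: lin_emb Dk_sum fP v)
  also have "harm (Lw (z j) P1) v + harm (Lw (z m) P2) v + harm (Lw (z (j+m)) P3) v = harm (hw (z j @ u) (z m @ w)) v"
    unfolding hw_rec[OF j u] P1_def P2_def P3_def by (simp add: harm_add1 fs_add fs_Lw fh)
  also have "\<dots> = harm (mon (z j @ u)) H1"
    unfolding H1_def by (rule assoc_poly) (use u v h1word_zapp in auto)
  also have "harm P1 v = harm (mon u) H1"
    unfolding P1_def H1_def by (rule assoc_poly) (use u v h1word_zapp in auto)
  also have "harm P2 v = harm (mon (z j @ u)) Hw"
    unfolding P2_def Hw_def by (rule assoc_poly) (use u v h1word_zapp in auto)
  also have "harm P3 v = harm (mon u) Hw"
    unfolding P3_def Hw_def by (rule assoc_poly) (use u v in auto)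
  finally have R: "Dop (V0 (j, u) (m, w)) v = harm (mon (z j @ u)) H1 -
      (Lw (z j) (harm (mon u) H1) + Lw (z m) (harm (mon (z j @ u)) Hw) + Lw (z (j + m)) (harm (mon u) Hw))" .
  have rec: "harm (mon (z j @ u)) (Lw (z m) Hw) = Lw (z j) (harm (mon u) (Lw (z m) Hw)) + Lw (z m) (harm (mon (z j @ u)) Hw)
      + Lw (z (j+m)) (harm (mon u) Hw)"
    using harm_rec[of j m "mon u" Hw] j u fH h1H by (simp add: fs_mon supp_mon Lw_mon)
  have "Dk (j, u) (Dk (m, w) v) = harm (mon (z j @ u)) (H1 - Lw (z m) Hw) - Lw (z j) (harm (mon u) (H1 - Lw (z m) Hw))"
    by (simp add: Dk_def H1_def Hw_def)
  also have "\<dots> = harm (mon (z j @ u)) H1 - harm (mon (z j @ u)) (Lw (z m) Hw) - Lw (z j) (harm (mon u) H1)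
      + Lw (z j) (harm (mon u) (Lw (z m) Hw))"
    by (simp add: harm_diff2 fs_mon fH fs_Lw Lw_diff)
  also have "\<dots> = Dop (V0 (j, u) (m, w)) v"
    unfolding R rec by (simp add: algebra_simps)
  finally show ?thesis .
qed

lemma supp_add_sub: "supp (p + q) \<subseteq> supp p \<union> supp q" by (auto simp: supp_def)

lemma V0_supp:
  assumes j: "1 \<le> j" "j \<le> k" "h1word u" "length u = k - j"
    and m: "1 \<le> m" "m \<le> l" "h1word w" "length w = l - m"
    and pa: "(p, a) \<in> supp (V0 (j, u) (m, w))"
  shows "1 \<le> p \<and> p \<le> k + l \<and> h1word a \<and> length a = k + l - p"
proof -
  have "supp (V0 (j, u) (m, w)) \<subseteq> Pair j ` supp (hw u (z m @ w)) \<union> Pair m ` supp (hw (z j @ u) w) \<union> Pair (j + m) ` supp (hw u w)"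
  proof -
    have "supp (V0 (j, u) (m, w)) \<subseteq> supp (emb j (hw u (z m @ w))) \<union> supp (emb m (hw (z j @ u) w)) \<union> supp (emb (j + m) (hw u w))"
      unfolding V0_def by (auto simp: supp_def)
    then show ?thesis by (simp add: supp_emb)
  qed
  with pa have "(p = j \<and> a \<in> supp (hw u (z m @ w))) \<or> (p = m \<and> a \<in> supp (hw (z j @ u) w)) \<or> (p = j + m \<and> a \<in> supp (hw u w))"
    by auto
  then show ?thesis
  proof (elim disjE conjE)
    assume "p = j" "a \<in> supp (hw u (z m @ w))"
    moreover have "length a = length u + length (z m @ w)"
      using length_supp_hw[of u "z m @ w" a] calculation j m h1word_zapp by blast
    ultimately show ?thesis using j m h1_supp_hw by auto
  next
    assume "p = m" "a \<in> supp (hw (z j @ u) w)"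
    moreover have "length a = length (z j @ u) + length w"
      using length_supp_hw[of "z j @ u" w a] calculation j m h1word_zapp by blast
    ultimately show ?thesis using j m h1_supp_hw by auto
  next
    assume "p = j + m" "a \<in> supp (hw u w)"
    moreover have "length a = length u + length w"
      using length_supp_hw[of u w a] calculation j m by blast
    ultimately show ?thesis using j m h1_supp_hw by auto
  qed
qed

theorem mainTheorem13:
  fixes k l :: nat and cX cY :: comb
  assumes "1 \<le> k" and "1 \<le> l" and "inWp k cX" and "inWp l cY"
  shows "\<exists>cV. inWp (k + l) cV \<and> (\<forall>v. inH1 v \<longrightarrow> Dop cX (Dop cY v) = Dop cV v)"
proof -
  have fX: "fs cX" and fY: "fs cY" using assms(3,4) by (simp_all add: inWp_def)
  have cX: "\<And>j u. (j, u) \<in> supp cX \<Longrightarrow> 1 \<le> j \<and> j \<le> k \<and> h1word u \<and> length u = k - j"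
    using assms(3) by (auto simp: inWp_def)
  have cY: "\<And>j u. (j, u) \<in> supp cY \<Longrightarrow> 1 \<le> j \<and> j \<le> l \<and> h1word u \<and> length u = l - j"
    using assms(4) by (auto simp: inWp_def)
  define T where "T = (\<lambda>t. cX (fst t) * cY (snd t))"
  have sT: "supp T = supp cX \<times> supp cY" by (auto simp: supp_def T_def)
  have fT: "fs T" using fX fY sT by simp
  define cV where "cV = lin (\<lambda>t. V0 (fst t) (snd t)) T"
  have fV: "fs cV" unfolding cV_def using fT fs_V0 by (intro fs_lin) auto
  have inV: "inWp (k + l) cV"
    unfolding inWp_def
  proof (intro conjI fV ballI)
    fix e assume e: "e \<in> supp cV"
    then obtain t where t: "t \<in> supp T" "e \<in> supp (V0 (fst t) (snd t))"
      using supp_lin[of "\<lambda>t. V0 (fst t) (snd t)" T] unfolding cV_def by blast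
    obtain j u m w where jm: "t = ((j, u), (m, w))" by (metis prod.collapse)
    obtain p a where pa: "e = (p, a)" by (metis prod.collapse)
    have "(j, u) \<in> supp cX" "(m, w) \<in> supp cY" using t(1) sT jm by auto
    then show "case e of (j', w') \<Rightarrow> 1 \<le> j' \<and> j' \<le> k + l \<and> h1word w' \<and> length w' = k + l - j'"
      using V0_supp[of j k u m l w p a] cX cY t(2) jm pa by auto
  qed
  have "\<forall>v. inH1 v \<longrightarrow> Dop cX (Dop cY v) = Dop cV v"
  proof (intro allI impI)
    fix v assume "inH1 v"
    then have v: "fs v" "h1s v" by (auto simp: inH1_def)
    have "Dop cX (Dop cY v) = lin (\<lambda>e. Dk e (lin (\<lambda>f. Dk f v) cY)) cX"
      by (simp add: Dop_lin)
    also have "\<dots> = lin (\<lambda>e. lin (\<lambda>f. Dk e (Dk f v)) cY) cX"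
      by (rule lin_cong, rule Dk_lin) (use fY fs_Dk v in auto)
    also have "\<dots> = lin (\<lambda>t. Dk (fst t) (Dk (snd t) v)) T"
      unfolding T_def by (rule lin_tensor[OF fX fY])
    also have "\<dots> = lin (\<lambda>t. Dop (V0 (fst t) (snd t)) v) T"
    proof (rule lin_cong)
      fix t assume "t \<in> supp T"
      obtain j u m w where jm: "t = ((j, u), (m, w))" by (metis prod.collapse)
      have "(j, u) \<in> supp cX" "(m, w) \<in> supp cY" using \<open>t \<in> supp T\<close> sT jm by auto
      then show "Dk (fst t) (Dk (snd t) v) = Dop (V0 (fst t) (snd t)) v"
        using pair_identity[of j m u w v] cX cY v jm by auto
    qed
    also have "\<dots> = lin (\<lambda>t. lin (\<lambda>e. Dk e v) (V0 (fst t) (snd t))) T"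
      by (simp add: Dop_lin)
    also have "\<dots> = lin (\<lambda>e. Dk e v) cV"
      unfolding cV_def by (rule lin_comp[symmetric]) (use fT fs_V0 in auto)
    also have "\<dots> = Dop cV v" by (simp add: Dop_lin)
    finally show "Dop cX (Dop cY v) = Dop cV v" .
  qed
  then show ?thesis using inV by blast
qed

end
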